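(* For $|q|<1$, let $$S(q):=\sum_{n=1}^{\infty} \frac{q^n (q^{n+1};q)_n (q^{2n+2};q^2)_{\infty}}{(1+q^n)(-q^{n+1};q)_n (-q^{2n+2};q^2)_{\infty}}.$$ Then $$S(q)=-\sum_{n=1}^{\infty} (-1)^n q^{2n^2}+\sum_{k=1}^{\infty} \frac{q^{k} (q;q^2)_{k}}{(-q;q^2)_k (1+q^{2k})}.$$
   Context: $(a;q)_n=\prod_{j=0}^{n-1}(1-aq^j)$, $(a;q)_\infty=\prod_{j\ge0}(1-aq^j)$. *)

theory Defs
  imports "HOL-Analysis.Analysis"
begin

definition qpoch :: "complex \<Rightarrow> complex \<Rightarrow> nat \<Rightarrow> complex" where
  "qpoch a q n = (\<Prod>j<n. 1 - a * q ^ j)"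

definition qpoch_inf :: "complex \<Rightarrow> complex \<Rightarrow> complex" where
  "qpoch_inf a q = (\<Prod>j. 1 - a * q ^ j)"

end

theory Submission
  imports Defs
begin
lemma qpoch_0[simp]: "qpoch a b 0 = 1" by (simp add: qpoch_def)
lemma qpoch_Suc: "qpoch a b (Suc n) = qpoch a b n * (1 - a * b ^ n)"
  by (simp add: qpoch_def)

lemma qpoch_add: "qpoch a b (m + n) = qpoch a b m * qpoch (a * b ^ m) b n"
  by (induction n) (simp_all add: qpoch_Suc power_add mult_ac)

lemma qpoch_double: "qpoch a b (2 * n) = qpoch a (b^2) n * qpoch (a * b) (b^2) n"
proof (induction n)
  case 0 then show ?case by simp
next
  case (Suc n)
  have "2 * Suc n = Suc (Suc (2*n))" by simp
  then have "qpoch a b (2 * Suc n) = qpoch a b (2*n) * (1 - a * b^(2*n)) * (1 - a * b^(Suc (2*n)))"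
    by (simp add: qpoch_Suc)
  also have "\<dots> = qpoch a (b^2) (Suc n) * qpoch (a * b) (b^2) (Suc n)"
  proof -
    have e1: "(b^2)^n = b^(2*n)" by (simp add: power_mult)
    show ?thesis unfolding qpoch_Suc Suc.IH e1 by (simp add: mult_ac)
  qed
  finally show ?case .
qed

lemma qpoch_neg1: "qpoch (-1) b m * (1 + b ^ m) = 2 * qpoch (-b) b m"
proof -
  have "qpoch (-1) b (1 + m) = qpoch (-1) b 1 * qpoch (-b) b m"
    using qpoch_add[of "-1" b 1 m] by simp
  moreover have "qpoch (-1) b (1 + m) = qpoch (-1) b m * (1 + b ^ m)"
    using qpoch_Suc[of "-1" b m] by simp
  moreover have "qpoch (-1) b 1 = 2" by (simp add: qpoch_def)
  ultimately show ?thesis by simp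
qed

lemma qpoch_pm: "qpoch (-a) b n * qpoch a b n = qpoch (a^2) (b^2) n"
  by (induction n) (simp_all add: qpoch_Suc algebra_simps power2_eq_square power_mult_distrib)

lemma nz_factor:
  fixes a b :: complex
  assumes "norm a \<le> 1" "norm b < 1" "a \<noteq> 1"
  shows "1 - a * b ^ j \<noteq> 0"
proof (cases j)
  case 0 then show ?thesis using assms by simp
next
  case (Suc k)
  have "norm (a * b ^ j) = norm a * norm b ^ j" by (simp add: norm_mult norm_power)
  also have "\<dots> \<le> norm b ^ j" using assms by (simp add: mult_left_le_one_le)
  also have "\<dots> < 1" using assms Suc power_less_one_iff[of "norm b" j] by simp
  finally show ?thesis by auto
qed

lemma qpoch_nz:
  fixes a b :: complex
  assumes "norm a \<le> 1" "norm b < 1" "a \<noteq> 1"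
  shows "qpoch a b n \<noteq> 0"
  unfolding qpoch_def using nz_factor[OF assms] by (simp add: prod_zero_iff)

lemma qpoch_convprod:
  fixes a b :: complex
  assumes "norm b < 1"
  shows "convergent_prod (\<lambda>j. 1 - a * b ^ j)"
proof -
  have "summable (\<lambda>j. norm a * norm b ^ j)"
    using assms by (intro summable_mult summable_geometric) simp
  then have "summable (\<lambda>j. norm ((1 - a * b ^ j) - 1))"
    by (simp add: norm_mult norm_power)
  then show ?thesis
    by (intro abs_convergent_prod_imp_convergent_prod summable_imp_abs_convergent_prod)
qed

lemma qpoch_lim:
  fixes a b :: complex
  assumes "norm b < 1"
  shows "(\<lambda>n. qpoch a b n) \<longlonglongrightarrow> qpoch_inf a b"
proof -
  have "(\<lambda>n. \<Prod>j\<le>n. 1 - a * b ^ j) \<longlonglongrightarrow> qpoch_inf a b"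
    unfolding qpoch_inf_def by (rule convergent_prod_LIMSEQ[OF qpoch_convprod[OF assms]])
  then have "(\<lambda>n. qpoch a b (Suc n)) \<longlonglongrightarrow> qpoch_inf a b"
    by (simp add: qpoch_def lessThan_Suc_atMost)
  then show ?thesis by (rule LIMSEQ_imp_Suc)
qed

lemma qpoch_inf_nz:
  fixes a b :: complex
  assumes "norm a \<le> 1" "norm b < 1" "a \<noteq> 1"
  shows "qpoch_inf a b \<noteq> 0"
  unfolding qpoch_inf_def
  by (rule prodinf_nonzero[OF qpoch_convprod[OF assms(2)]]) (use nz_factor[OF assms] in auto)

lemma qpoch_inf_split:
  fixes a b :: complex
  assumes "norm b < 1"
  shows "qpoch_inf a b = qpoch a b n * qpoch_inf (a * b ^ n) b"
proof -
  have "(\<lambda>m. qpoch a b (m + n)) \<longlonglongrightarrow> qpoch_inf a b"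
    using LIMSEQ_ignore_initial_segment[OF qpoch_lim[OF assms], where k=n] by simp
  moreover have "(\<lambda>m. qpoch a b (m + n)) \<longlonglongrightarrow> qpoch a b n * qpoch_inf (a * b ^ n) b"
    unfolding add.commute[of _ n] qpoch_add by (intro tendsto_mult tendsto_const qpoch_lim assms)
  ultimately show ?thesis by (rule LIMSEQ_unique)
qed

lemma qpoch_inf_double:
  fixes a b :: complex
  assumes "norm b < 1"
  shows "qpoch_inf a b = qpoch_inf a (b^2) * qpoch_inf (a * b) (b^2)"
proof -
  have b2: "norm (b^2) < 1" using assms by (simp add: norm_power power_less_one_iff)
  have "(\<lambda>n. qpoch a b (2*n)) \<longlonglongrightarrow> qpoch_inf a b"
    by (rule LIMSEQ_subseq_LIMSEQ[OF qpoch_lim[OF assms], unfolded o_def]) (simp add: strict_mono_def)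
  moreover have "(\<lambda>n. qpoch a b (2*n)) \<longlonglongrightarrow> qpoch_inf a (b^2) * qpoch_inf (a * b) (b^2)"
    unfolding qpoch_double by (intro tendsto_mult qpoch_lim b2)
  ultimately show ?thesis by (rule LIMSEQ_unique)
qed

lemma qpoch_inf_pm:
  fixes a b :: complex
  assumes "norm b < 1"
  shows "qpoch_inf (-a) b * qpoch_inf a b = qpoch_inf (a^2) (b^2)"
proof -
  have b2: "norm (b^2) < 1" using assms by (simp add: norm_power power_less_one_iff)
  have "(\<lambda>n. qpoch (-a) b n * qpoch a b n) \<longlonglongrightarrow> qpoch_inf (-a) b * qpoch_inf a b"
    by (intro tendsto_mult qpoch_lim assms)
  moreover have "(\<lambda>n. qpoch (-a) b n * qpoch a b n) \<longlonglongrightarrow> qpoch_inf (a^2) (b^2)"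
    unfolding qpoch_pm by (intro qpoch_lim b2)
  ultimately show ?thesis by (rule LIMSEQ_unique)
qed

lemma geom_partial_le:
  fixes r :: real assumes "0 \<le> r" "r < 1"
  shows "(\<Sum>j<n. r ^ j) \<le> 1 / (1 - r)"
proof -
  have "(\<Sum>j<n. r ^ j) \<le> (\<Sum>j. r ^ j)"
    by (rule sum_le_suminf) (use assms in \<open>auto intro: summable_geometric\<close>)
  also have "\<dots> = 1 / (1 - r)" using assms by (intro suminf_geometric) simp
  finally show ?thesis .
qed

lemma qpoch_upper:
  fixes a b :: complex
  assumes "norm b < 1"
  shows "norm (qpoch a b n) \<le> exp (norm a / (1 - norm b))"
proof -
  have "norm (qpoch a b n) = (\<Prod>j<n. norm (1 - a * b ^ j))"
    by (simp add: qpoch_def prod_norm)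
  also have "\<dots> \<le> (\<Prod>j<n. exp (norm a * norm b ^ j))"
  proof (rule prod_mono, safe)
    fix j
    have "norm (1 - a * b ^ j) \<le> 1 + norm (a * b ^ j)" using norm_triangle_ineq4[of 1 "a*b^j"] by simp
    also have "\<dots> = 1 + norm a * norm b ^ j" by (simp add: norm_mult norm_power)
    also have "\<dots> \<le> exp (norm a * norm b ^ j)" using exp_ge_add_one_self[of "norm a * norm b ^ j"] by simp
    finally show "norm (1 - a * b ^ j) \<le> exp (norm a * norm b ^ j)" .
  qed simp
  also have "\<dots> = exp (norm a * (\<Sum>j<n. norm b ^ j))"
    by (simp add: exp_sum sum_distrib_left)
  also have "\<dots> \<le> exp (norm a * (1 / (1 - norm b)))"
    using geom_partial_le[of "norm b" n] assms by (intro exp_mono mult_left_mono) auto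
  finally show ?thesis by simp
qed

lemma one_minus_ge_exp:
  fixes x s :: real assumes "0 \<le> x" "x \<le> s" "s < 1"
  shows "exp (- x / (1 - s)) \<le> 1 - x"
proof -
  have "1 + x / (1 - s) \<le> exp (x / (1 - s))" by (rule exp_ge_add_one_self)
  moreover have "1 \<le> (1 - x) * (1 + x / (1 - s))"
  proof -
    have "(1 - x) * (1 + x / (1 - s)) = 1 + x * ((s - x) / (1 - s))"
      using assms by (simp add: field_simps)
    also have "\<dots> \<ge> 1" using assms by simp
    finally show ?thesis by simp
  qed
  moreover have "(1 - x) * (1 + x / (1 - s)) \<le> (1 - x) * exp (x / (1 - s))"
    using calculation(1) assms by (intro mult_left_mono) auto
  ultimately have "1 \<le> (1 - x) * exp (x / (1 - s))" by linarith
  then have "exp (- (x / (1 - s))) \<le> 1 - x"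
    by (simp add: exp_minus field_simps)
  then show ?thesis by simp
qed

lemma qpoch_lower:
  fixes a b :: complex
  assumes "norm a < 1" "norm b < 1"
  shows "exp (- norm a / ((1 - norm a) * (1 - norm b))) \<le> norm (qpoch a b n)"
proof -
  let ?s = "norm a"
  have "exp (- ?s / ((1 - ?s) * (1 - norm b))) \<le> exp (- (?s * (\<Sum>j<n. norm b ^ j)) / (1 - ?s))"
  proof -
    have "?s * (\<Sum>j<n. norm b ^ j) \<le> ?s * (1 / (1 - norm b))"
      using geom_partial_le[of "norm b" n] assms by (intro mult_left_mono) auto
    then have "?s * (\<Sum>j<n. norm b ^ j) / (1 - ?s) \<le> ?s * (1 / (1 - norm b)) / (1 - ?s)"
      using assms by (intro divide_right_mono) auto
    also have "\<dots> = ?s / ((1 - ?s) * (1 - norm b))" by simp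
    finally show ?thesis by simp
  qed
  also have "\<dots> = (\<Prod>j<n. exp (- (?s * norm b ^ j) / (1 - ?s)))"
    by (simp add: exp_sum[symmetric] sum_distrib_left sum_divide_distrib sum_negf)
  also have "\<dots> \<le> (\<Prod>j<n. norm (1 - a * b ^ j))"
  proof (rule prod_mono, safe)
    fix j
    have x: "?s * norm b ^ j \<le> ?s"
      using assms by (intro mult_right_le_one_le) (auto intro: power_le_one)
    have "exp (- (?s * norm b ^ j) / (1 - ?s)) \<le> 1 - ?s * norm b ^ j"
      by (rule one_minus_ge_exp) (use x assms in auto)
    also have "\<dots> = 1 - norm (a * b ^ j)" by (simp add: norm_mult norm_power)
    also have "\<dots> \<le> norm (1 - a * b ^ j)" using norm_triangle_ineq2[of 1 "a*b^j"] by simp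
    finally show "exp (- (?s * norm b ^ j) / (1 - ?s)) \<le> norm (1 - a * b ^ j)" .
  qed simp
  also have "\<dots> = norm (qpoch a b n)" by (simp add: qpoch_def prod_norm)
  finally show ?thesis .
qed

definition qd :: "complex \<Rightarrow> nat \<Rightarrow> complex" where
  "qd b n = qpoch (-1) b n / qpoch b b n"

lemma qd_0[simp]: "qd b 0 = 1" by (simp add: qd_def)

lemma qd_rec:
  assumes "norm b < 1"
  shows "qd b (Suc n) * (1 - b ^ Suc n) = qd b n * (1 + b ^ n)"
proof -
  have "b \<noteq> 1" using assms by auto
  then have nz: "qpoch b b n \<noteq> 0" "1 - b * b ^ n \<noteq> 0"
    using qpoch_nz[of b b n] nz_factor[of b b n] assms by auto
  show ?thesis using nz unfolding qd_def qpoch_Suc power_Suc by (simp add: field_simps)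
qed

definition Cd :: "complex \<Rightarrow> real" where
  "Cd b = exp (1 / (1 - norm b)) / exp (- norm b / ((1 - norm b) * (1 - norm b)))"

lemma qd_bound:
  assumes "norm b < 1"
  shows "norm (qd b n) \<le> Cd b"
proof -
  have u: "norm (qpoch (-1) b n) \<le> exp (1 / (1 - norm b))"
    using qpoch_upper[of b "-1" n] assms by simp
  have l: "exp (- norm b / ((1 - norm b) * (1 - norm b))) \<le> norm (qpoch b b n)"
    using qpoch_lower[of b b n] assms by simp
  show ?thesis unfolding qd_def Cd_def norm_divide
    by (rule frac_le) (use u l in auto)
qed

lemma Cd_nonneg: "Cd b \<ge> 0" by (simp add: Cd_def)

definition G :: "complex \<Rightarrow> complex \<Rightarrow> complex" where
  "G b y = (\<Sum>n. qd b n * y ^ n)"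

lemma G_summable:
  assumes "norm b < 1" "norm y < 1"
  shows "summable (\<lambda>n. qd b n * y ^ n)"
proof (rule summable_comparison_test')
  show "summable (\<lambda>n. Cd b * norm y ^ n)"
    using assms by (intro summable_mult summable_geometric) simp
  fix n show "norm (qd b n * y ^ n) \<le> Cd b * norm y ^ n"
    unfolding norm_mult norm_power by (intro mult_right_mono qd_bound assms) simp
qed

lemma norm_pow_mult_lt1:
  fixes b y :: complex assumes "norm b < 1" "norm y < 1"
  shows "norm (b ^ N * y) < 1"
proof -
  have "norm (b ^ N * y) = norm b ^ N * norm y" by (simp add: norm_mult norm_power)
  also have "\<dots> \<le> norm y" using assms by (intro mult_left_le_one_le) (auto simp: power_le_one)
  finally show ?thesis using assms by simp
qed

lemma G_funeq:
  assumes "norm b < 1" "norm y < 1"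
  shows "(1 - y) * G b y = (1 + y) * G b (b * y)"
proof -
  have hby: "norm (b * y) < 1" using norm_pow_mult_lt1[OF assms, of 1] by simp
  have s1: "(\<lambda>n. qd b n * y ^ n) sums G b y"
    unfolding G_def using G_summable[OF assms] by (simp add: summable_sums)
  have s2: "(\<lambda>n. qd b n * (b*y) ^ n) sums G b (b*y)"
    unfolding G_def using G_summable[OF assms(1) hby] by (simp add: summable_sums)
  have a1: "(\<lambda>n. qd b (Suc n) * y ^ Suc n) sums (G b y - 1)"
    using s1 sums_Suc_iff[of "\<lambda>n. qd b n * y ^ n" "G b y - 1"] by simp
  have a2: "(\<lambda>n. qd b n * y ^ Suc n) sums (y * G b y)"
    using sums_mult[OF s1, of y] by (simp add: mult_ac)
  have b1: "(\<lambda>n. qd b (Suc n) * (b*y) ^ Suc n) sums (G b (b*y) - 1)"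
    using s2 sums_Suc_iff[of "\<lambda>n. qd b n * (b*y) ^ n" "G b (b*y) - 1"] by simp
  have b2: "(\<lambda>n. qd b n * (b*y) ^ n * y) sums (G b (b*y) * y)"
    using sums_mult2[OF s2, of y] by simp
  have A: "(\<lambda>n. qd b (Suc n) * y ^ Suc n - qd b n * y ^ Suc n) sums (G b y - 1 - y * G b y)"
    by (rule sums_diff[OF a1 a2])
  have B: "(\<lambda>n. qd b (Suc n) * (b*y) ^ Suc n + qd b n * (b*y) ^ n * y) sums (G b (b*y) - 1 + G b (b*y) * y)"
    by (rule sums_add[OF b1 b2])
  have eq: "qd b (Suc n) * y ^ Suc n - qd b n * y ^ Suc n = qd b (Suc n) * (b*y) ^ Suc n + qd b n * (b*y) ^ n * y" for n
  proof -
    have "qd b (Suc n) * y ^ Suc n - qd b (Suc n) * (b*y) ^ Suc n = qd b (Suc n) * (1 - b ^ Suc n) * y ^ Suc n"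
      by (simp add: power_mult_distrib algebra_simps)
    also have "\<dots> = qd b n * (1 + b ^ n) * y ^ Suc n" using qd_rec[OF assms(1)] by simp
    also have "\<dots> = qd b n * y ^ Suc n + qd b n * (b*y) ^ n * y"
      by (simp add: power_mult_distrib algebra_simps)
    finally show ?thesis by (simp add: algebra_simps)
  qed
  from A have "(\<lambda>n. qd b (Suc n) * (b*y) ^ Suc n + qd b n * (b*y) ^ n * y) sums (G b y - 1 - y * G b y)"
    unfolding eq .
  with B have "G b (b*y) - 1 + G b (b*y) * y = G b y - 1 - y * G b y" by (rule sums_unique2)
  then show ?thesis by (simp add: algebra_simps)
qed

lemma G_iter:
  assumes "norm b < 1" "norm y < 1"
  shows "qpoch y b N * G b y = qpoch (-y) b N * G b (b ^ N * y)"
proof (induction N)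
  case 0 then show ?case by simp
next
  case (Suc N)
  have fe: "(1 - b^N*y) * G b (b^N*y) = (1 + b^N*y) * G b (b * (b^N*y))"
    by (rule G_funeq[OF assms(1) norm_pow_mult_lt1[OF assms]])
  have "qpoch y b (Suc N) * G b y = (qpoch y b N * G b y) * (1 - y * b ^ N)"
    by (simp add: qpoch_Suc mult_ac)
  also have "\<dots> = qpoch (-y) b N * ((1 - b^N*y) * G b (b^N*y))"
    unfolding Suc.IH by (simp only: mult_ac)
  also have "\<dots> = qpoch (-y) b N * ((1 + b^N*y) * G b (b * (b^N*y)))"
    by (simp only: fe)
  also have "\<dots> = qpoch (-y) b (Suc N) * G b (b ^ Suc N * y)"
    by (simp add: qpoch_Suc mult_ac)
  finally show ?case .
qed

lemma G_lim0:
  assumes "norm b < 1" "norm y < 1"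
  shows "(\<lambda>N. G b (b ^ N * y)) \<longlonglongrightarrow> 1"
proof -
  have "isCont (G b) 0"
    unfolding G_def[abs_def]
    by (rule isCont_powser[where K="1/2"]) (use G_summable[OF assms(1), of "1/2"] in auto)
  moreover have "(\<lambda>N. b ^ N * y) \<longlonglongrightarrow> 0"
    using assms by (intro tendsto_mult_left_zero LIMSEQ_power_zero) 
  ultimately have "(\<lambda>N. G b (b ^ N * y)) \<longlonglongrightarrow> G b 0"
    by (rule isCont_tendsto_compose)
  moreover have "G b 0 = 1" unfolding G_def by simp
  ultimately show ?thesis by simp
qed

theorem qbinom:
  assumes "norm b < 1" "norm y < 1"
  shows "(\<lambda>n. qd b n * y ^ n) sums (qpoch_inf (-y) b / qpoch_inf y b)"
proof -
  have l1: "(\<lambda>N. qpoch y b N * G b y) \<longlonglongrightarrow> qpoch_inf y b * G b y"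
    by (intro tendsto_mult qpoch_lim assms tendsto_const)
  have l2: "(\<lambda>N. qpoch (-y) b N * G b (b ^ N * y)) \<longlonglongrightarrow> qpoch_inf (-y) b * 1"
    by (intro tendsto_mult qpoch_lim assms G_lim0)
  have "qpoch_inf y b * G b y = qpoch_inf (-y) b"
    using LIMSEQ_unique[OF l1 l2[folded G_iter[OF assms]]] by simp
  moreover have "qpoch_inf y b \<noteq> 0"
    using assms by (intro qpoch_inf_nz) auto
  ultimately have "G b y = qpoch_inf (-y) b / qpoch_inf y b" by (simp add: field_simps)
  moreover have "(\<lambda>n. qd b n * y^n) sums G b y"
    unfolding G_def by (rule summable_sums[OF G_summable[OF assms]])
  ultimately show ?thesis by simp
qed

lemma fubini_aux:
  fixes f :: "nat \<Rightarrow> nat \<Rightarrow> complex" and a b :: "nat \<Rightarrow> real"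
  assumes bnd: "\<And>m j. norm (f m j) \<le> a m * b j" and sa: "summable a" and sb: "summable b"
    and a0: "\<And>m. 0 \<le> a m" and b0: "\<And>j. 0 \<le> b j"
  shows "summable (\<lambda>m. \<Sum>j. f m j)"
proof -
  have s1: "summable (f m)" for m
    by (rule summable_comparison_test'[where g="\<lambda>j. a m * b j" and N=0]) (use bnd summable_mult[OF sb] in auto)
  have bd: "norm (\<Sum>j. f m j) \<le> a m * suminf b" for m
  proof -
    have sn: "summable (\<lambda>j. norm (f m j))"
      by (rule summable_comparison_test'[where g="\<lambda>j. a m * b j" and N=0]) (use bnd summable_mult[OF sb] in auto)
    have "norm (\<Sum>j. f m j) \<le> (\<Sum>j. norm (f m j))" by (rule summable_norm[OF sn])
    also have "\<dots> \<le> (\<Sum>j. a m * b j)" by (rule suminf_le) (use bnd sn summable_mult[OF sb] in auto)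
    also have "\<dots> = a m * suminf b" by (rule suminf_mult[OF sb])
    finally show ?thesis .
  qed
  have sm: "summable (\<lambda>m. a m * suminf b)" by (rule summable_mult2[OF sa])
  show ?thesis
    by (rule summable_comparison_test'[OF sm, where N=0]) (rule bd)
qed

lemma fubini_nat:
  fixes f :: "nat \<Rightarrow> nat \<Rightarrow> complex" and a b :: "nat \<Rightarrow> real"
  assumes bnd: "\<And>m j. norm (f m j) \<le> a m * b j" and sa: "summable a" and sb: "summable b"
    and a0: "\<And>m. 0 \<le> a m" and b0: "\<And>j. 0 \<le> b j"
  shows "summable (\<lambda>m. \<Sum>j. f m j)" "summable (\<lambda>j. \<Sum>m. f m j)"
    "(\<Sum>m. \<Sum>j. f m j) = (\<Sum>j. \<Sum>m. f m j)"
proof -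
  show S1: "summable (\<lambda>m. \<Sum>j. f m j)" by (rule fubini_aux[OF assms])
  show "summable (\<lambda>j. \<Sum>m. f m j)"
  proof (rule fubini_aux[where f="\<lambda>j m. f m j" and a=b and b=a, OF _ sb sa b0 a0])
    fix m j show "norm (f j m) \<le> b m * a j" using bnd[of j m] by (simp only: mult.commute)
  qed
  have s1: "summable (f m)" for m
    by (rule summable_comparison_test'[where g="\<lambda>j. a m * b j" and N=0]) (use bnd summable_mult[OF sb] in auto)
  have s2: "summable (\<lambda>m. f m j)" for j
    by (rule summable_comparison_test'[where g="\<lambda>m. a m * b j" and N=0]) (use bnd summable_mult2[OF sa] in auto)
  have T: "((\<lambda>n. \<Sum>k. (\<Sum>m<n. f m k)) \<longlongrightarrow> (\<Sum>k. \<Sum>m. f m k)) sequentially"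
  proof (rule tannerys_theorem[where M="\<lambda>k. suminf a * b k", THEN conjunct2, THEN conjunct2])
    show "\<And>k. (\<lambda>n. \<Sum>m<n. f m k) \<longlonglongrightarrow> (\<Sum>m. f m k)" by (rule summable_LIMSEQ[OF s2])
    show "summable (\<lambda>k. suminf a * b k)" by (rule summable_mult[OF sb])
    show "sequentially \<noteq> bot" by simp
    show "\<forall>\<^sub>F (k, n) in at_top \<times>\<^sub>F sequentially. norm (\<Sum>m<n. f m k) \<le> suminf a * b k"
    proof (intro always_eventually allI, clarify)
      fix k n
      have "norm (\<Sum>m<n. f m k) \<le> (\<Sum>m<n. a m * b k)"
        by (rule order.trans[OF norm_sum sum_mono]) (rule bnd)
      also have "\<dots> = (\<Sum>m<n. a m) * b k" by (simp add: sum_distrib_right)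
      also have "\<dots> \<le> suminf a * b k"
        by (intro mult_right_mono sum_le_suminf sa b0) (auto simp: a0)
      finally show "norm (\<Sum>m<n. f m k) \<le> suminf a * b k" .
    qed
  qed
  have eq: "(\<lambda>n. \<Sum>k. (\<Sum>m<n. f m k)) = (\<lambda>n. \<Sum>m<n. \<Sum>k. f m k)"
    by (intro ext suminf_sum s1)
  have T': "(\<lambda>n. \<Sum>m<n. \<Sum>k. f m k) \<longlonglongrightarrow> (\<Sum>k. \<Sum>m. f m k)"
    using T unfolding eq .
  have L: "(\<lambda>n. \<Sum>m<n. \<Sum>k. f m k) \<longlonglongrightarrow> (\<Sum>m. \<Sum>k. f m k)"
    by (rule summable_LIMSEQ[OF S1])
  show "(\<Sum>m. \<Sum>j. f m j) = (\<Sum>j. \<Sum>m. f m j)"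
    using LIMSEQ_unique[OF L T'] .
qed

lemma norm_qpow_lt1: fixes q :: complex assumes "norm q < 1" "0 < k" shows "norm (q ^ k) < 1"
  using assms power_less_one_iff[of "norm q" k] by (simp add: norm_power)

lemma qpoch_nz': fixes a b :: complex assumes "norm a < 1" "norm b < 1" shows "qpoch a b n \<noteq> 0"
  using assms by (intro qpoch_nz) auto
lemma qpoch_inf_nz': fixes a b :: complex assumes "norm a < 1" "norm b < 1" shows "qpoch_inf a b \<noteq> 0"
  using assms by (intro qpoch_inf_nz) auto

lemma alg1:
  fixes A B C D u :: complex assumes "C \<noteq> 0" "B \<noteq> 0" "u \<noteq> 0" "D \<noteq> 0"
  shows "D / C * (A * C) / (B * (D * u / 2)) = 2 * (A / B) / u"
  using assms by (simp add: divide_simps)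

definition hh :: "complex \<Rightarrow> nat \<Rightarrow> complex" where
  "hh q n = qpoch q (q^2) n / qpoch (-q) (q^2) n"

lemma finite_E:
  fixes q :: complex assumes q: "norm q < 1"
  shows "qd (q^2) j * qpoch q q (2*j) / qpoch (-q) q (2*j) = 2 * hh q j / (1 + q^(2*j))"
proof -
  have b2: "norm (q^2) < 1" using norm_qpow_lt1[OF q, of 2] by simp
  have d1: "qpoch q q (2*j) = qpoch q (q^2) j * qpoch (q^2) (q^2) j"
    using qpoch_double[of q q j] by (simp add: power2_eq_square)
  have d2: "qpoch (-q) q (2*j) = qpoch (-q) (q^2) j * qpoch (-(q^2)) (q^2) j"
    using qpoch_double[of "-q" q j] by (simp add: power2_eq_square)
  have n1: "qpoch (-1) (q^2) j * (1 + q^(2*j)) = 2 * qpoch (-(q^2)) (q^2) j"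
    using qpoch_neg1[of "q^2" j] by (simp add: power_mult)
  have z1: "qpoch (q^2) (q^2) j \<noteq> 0" using qpoch_nz'[OF b2 b2] .
  have z2: "qpoch (-q) (q^2) j \<noteq> 0" using qpoch_nz'[OF _ b2] q by simp
  have z3: "qpoch (-(q^2)) (q^2) j \<noteq> 0" using qpoch_nz'[OF _ b2] b2 by simp
  have z4: "1 + q^(2*j) \<noteq> 0"
    using nz_factor[of "-1" "q^2" j] b2 by (simp add: power_mult)
  have z5: "qpoch (-1) (q^2) j \<noteq> 0" using qpoch_nz[of "-1" "q^2" j] b2 by simp
  define u where "u = 1 + q^(2*j)"
  have n2: "qpoch (-(q^2)) (q^2) j = qpoch (-1) (q^2) j * u / 2" using n1 unfolding u_def by simp
  have z4': "u \<noteq> 0" using z4 unfolding u_def .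
  show ?thesis
    unfolding qd_def hh_def d1 d2 n2 u_def[symmetric] by (rule alg1[OF z1 z2 z4' z5])
qed

lemma core:
  fixes q :: complex assumes q: "norm q < 1"
  shows "summable (\<lambda>j. q^j * hh q j / (1 + q^(2*j)))"
    and "(\<lambda>m. q^m * hh q m * qd q m) sums
          (2 * (qpoch_inf (-(q^2)) (q^2) / qpoch_inf (q^2) (q^2)) * (\<Sum>j. q^j * hh q j / (1 + q^(2*j))))"
proof -
  define b2 where "b2 = q^2"
  have b2: "norm b2 < 1" unfolding b2_def using norm_qpow_lt1[OF q, of 2] by simp
  define r where "r = norm q"
  have r: "0 \<le> r" "r < 1" using q by (auto simp: r_def)
  define hinf where "hinf = qpoch_inf q b2 / qpoch_inf (-q) b2"
  define K where "K = qpoch_inf (-q) q / qpoch_inf q q"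
  define f where "f m j = qd q m * qd b2 j * q^m * (q^(2*m+1))^j" for m j
  have hinfnz: "hinf \<noteq> 0" unfolding hinf_def using qpoch_inf_nz'[OF q b2] qpoch_inf_nz'[OF _ b2, of "-q"] q by simp
  have Knz: "K \<noteq> 0" unfolding K_def using qpoch_inf_nz'[OF q q] qpoch_inf_nz'[OF _ q, of "-q"] q by simp
  have inner1: "q^m * hh q m * qd q m = hinf * (\<Sum>j. f m j)" for m
  proof -
    define y where "y = q^(2*m+1)"
    have y: "norm y < 1" unfolding y_def by (rule norm_qpow_lt1[OF q]) simp
    have s: "(\<lambda>j. qd b2 j * y^j) sums (qpoch_inf (-y) b2 / qpoch_inf y b2)"
      by (rule qbinom[OF b2 y])
    have "(\<lambda>j. (qd q m * q^m) * (qd b2 j * y^j)) sums ((qd q m * q^m) * (qpoch_inf (-y) b2 / qpoch_inf y b2))"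
      by (rule sums_mult[OF s])
    then have "(\<Sum>j. f m j) = (qd q m * q^m) * (qpoch_inf (-y) b2 / qpoch_inf y b2)"
      unfolding f_def y_def by (simp add: sums_iff mult_ac)
    moreover have "hh q m = hinf * (qpoch_inf (-y) b2 / qpoch_inf y b2)"
    proof -
      have e1: "qpoch_inf q b2 = qpoch q b2 m * qpoch_inf y b2"
        using qpoch_inf_split[OF b2, of q m] unfolding y_def b2_def by (simp add: power_mult[symmetric] mult_ac)
      have e2: "qpoch_inf (-q) b2 = qpoch (-q) b2 m * qpoch_inf (-y) b2"
        using qpoch_inf_split[OF b2, of "-q" m] unfolding y_def b2_def by (simp add: power_mult[symmetric] mult_ac)
      have z: "qpoch_inf y b2 \<noteq> 0" "qpoch_inf (-y) b2 \<noteq> 0" "qpoch (-q) b2 m \<noteq> 0"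
        using qpoch_inf_nz'[OF y b2] qpoch_inf_nz'[OF _ b2, of "-y"] qpoch_nz'[OF _ b2, of "-q"] y q by auto
      show ?thesis unfolding hh_def hinf_def e1 e2 b2_def[symmetric] using z by (simp add: field_simps)
    qed
    ultimately show ?thesis by (simp add: mult_ac)
  qed
  have inner2: "(\<Sum>m. f m j) = 2 * K * (q^j * hh q j / (1 + q^(2*j)))" for j
  proof -
    define z where "z = q^(2*j+1)"
    have z: "norm z < 1" unfolding z_def by (rule norm_qpow_lt1[OF q]) simp
    have s: "(\<lambda>m. qd q m * z^m) sums (qpoch_inf (-z) q / qpoch_inf z q)"
      by (rule qbinom[OF q z])
    have ex: "q^m * (q^(2*m+1))^j = q^j * z^m" for m
    proof -
      have e: "m + (2*m+1)*j = j + (2*j+1)*m" by (simp add: algebra_simps)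
      have "q^m * (q^(2*m+1))^j = q^(m + (2*m+1)*j)" by (simp only: power_add power_mult)
      also have "\<dots> = q^(j + (2*j+1)*m)" by (simp only: e)
      also have "\<dots> = q^j * z^m" by (simp only: z_def power_add power_mult)
      finally show ?thesis .
    qed
    have "(\<lambda>m. (qd b2 j * q^j) * (qd q m * z^m)) sums ((qd b2 j * q^j) * (qpoch_inf (-z) q / qpoch_inf z q))"
      by (rule sums_mult[OF s])
    moreover have fm: "f m j = (qd b2 j * q^j) * (qd q m * z^m)" for m
    proof -
      have "f m j = qd q m * qd b2 j * (q^m * (q^(2*m+1))^j)" unfolding f_def by (simp only: mult.assoc)
      also have "\<dots> = (qd b2 j * q^j) * (qd q m * z^m)" unfolding ex by (simp only: mult_ac)
      finally show ?thesis .
    qed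
    ultimately have "(\<Sum>m. f m j) = (qd b2 j * q^j) * (qpoch_inf (-z) q / qpoch_inf z q)"
      by (simp add: sums_iff)
    also have "qpoch_inf (-z) q / qpoch_inf z q = K * (qpoch q q (2*j) / qpoch (-q) q (2*j))"
    proof -
      have e1: "qpoch_inf q q = qpoch q q (2*j) * qpoch_inf z q"
        using qpoch_inf_split[OF q, of q "2*j"] unfolding z_def by (simp add: mult_ac)
      have e2: "qpoch_inf (-q) q = qpoch (-q) q (2*j) * qpoch_inf (-z) q"
        using qpoch_inf_split[OF q, of "-q" "2*j"] unfolding z_def by (simp add: mult_ac)
      have zz: "qpoch_inf z q \<noteq> 0" "qpoch_inf (-z) q \<noteq> 0" "qpoch (-q) q (2*j) \<noteq> 0" "qpoch q q (2*j) \<noteq> 0"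
        using qpoch_inf_nz'[OF z q] qpoch_inf_nz'[OF _ q, of "-z"] qpoch_nz'[OF _ q, of "-q"] qpoch_nz'[OF q q] z q by auto
      show ?thesis unfolding K_def e1 e2 using zz by (simp add: field_simps)
    qed
    finally have "(\<Sum>m. f m j) = K * q^j * (qd b2 j * qpoch q q (2*j) / qpoch (-q) q (2*j))"
      by (simp add: mult_ac)
    also have "\<dots> = K * q^j * (2 * hh q j / (1 + q^(2*j)))"
      unfolding b2_def by (simp only: finite_E[OF q])
    finally show ?thesis by (simp add: mult_ac)
  qed
  have bnd: "norm (f m j) \<le> (Cd q * r^m) * (Cd b2 * r^j)" for m j
  proof -
    have "norm (f m j) = norm (qd q m) * norm (qd b2 j) * (r^m * r^((2*m+1)*j))"
      unfolding f_def r_def norm_mult norm_power power_mult[symmetric] by (simp only: mult_ac)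
    also have "\<dots> \<le> Cd q * Cd b2 * (r^m * r^j)"
    proof (intro mult_mono qd_bound q b2 mult_left_mono)
      show "r ^ ((2*m+1)*j) \<le> r ^ j" using r by (intro power_decreasing) auto
    qed (use r Cd_nonneg in auto)
    finally show ?thesis by (simp add: mult_ac)
  qed
  have F: "summable (\<lambda>m. \<Sum>j. f m j)" "summable (\<lambda>j. \<Sum>m. f m j)" "(\<Sum>m. \<Sum>j. f m j) = (\<Sum>j. \<Sum>m. f m j)"
  proof -
    have sa: "summable (\<lambda>m. Cd q * r^m)" by (rule summable_mult[OF summable_geometric]) (use r in auto)
    have sb: "summable (\<lambda>m. Cd b2 * r^m)" by (rule summable_mult[OF summable_geometric]) (use r in auto)
    have a0: "\<And>m. 0 \<le> Cd q * r^m" "\<And>m. 0 \<le> Cd b2 * r^m" using Cd_nonneg r by auto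
    show "summable (\<lambda>m. \<Sum>j. f m j)" "summable (\<lambda>j. \<Sum>m. f m j)" "(\<Sum>m. \<Sum>j. f m j) = (\<Sum>j. \<Sum>m. f m j)"
      using fubini_nat[OF bnd sa sb a0] by blast+
  qed
  define T where "T j = q^j * hh q j / (1 + q^(2*j))" for j
  have "summable (\<lambda>j. 2 * K * T j)" using F(2) unfolding inner2 T_def .
  then have ST: "summable T" using Knz summable_mult[of "\<lambda>j. 2 * K * T j" "1/(2*K)"] by simp
  then show "summable (\<lambda>j. q^j * hh q j / (1 + q^(2*j)))" unfolding T_def .
  have "(\<lambda>m. q^m * hh q m * qd q m) sums (hinf * (\<Sum>m. \<Sum>j. f m j))"
    unfolding inner1 by (rule sums_mult[OF summable_sums[OF F(1)]])
  also have "(\<Sum>m. \<Sum>j. f m j) = (\<Sum>j. 2 * K * T j)" unfolding F(3) inner2 T_def ..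
  also have "\<dots> = 2 * K * suminf T" by (rule suminf_mult[OF ST])
  also have "hinf * (2 * K * suminf T) = 2 * (hinf * K) * suminf T" by simp
  also have "hinf * K = qpoch_inf (-(q^2)) (q^2) / qpoch_inf (q^2) (q^2)"
  proof -
    have e1: "qpoch_inf q q = qpoch_inf q b2 * qpoch_inf b2 b2"
      using qpoch_inf_double[OF q, of q] unfolding b2_def by (simp add: power2_eq_square)
    have e2: "qpoch_inf (-q) q = qpoch_inf (-q) b2 * qpoch_inf (-b2) b2"
      using qpoch_inf_double[OF q, of "-q"] unfolding b2_def by (simp add: power2_eq_square)
    have zz: "qpoch_inf q b2 \<noteq> 0" "qpoch_inf (-q) b2 \<noteq> 0" "qpoch_inf b2 b2 \<noteq> 0" "qpoch_inf (-b2) b2 \<noteq> 0"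
      using qpoch_inf_nz'[OF q b2] qpoch_inf_nz'[OF _ b2, of "-q"] qpoch_inf_nz'[OF b2 b2]
        qpoch_inf_nz'[OF _ b2, of "-b2"] q b2 by auto
    show ?thesis unfolding hinf_def K_def e1 e2 b2_def[symmetric] using zz by (simp add: field_simps)
  qed
  finally show "(\<lambda>m. q^m * hh q m * qd q m) sums
          (2 * (qpoch_inf (-(q^2)) (q^2) / qpoch_inf (q^2) (q^2)) * (\<Sum>j. q^j * hh q j / (1 + q^(2*j))))"
    unfolding T_def .
qed

fun tri :: "nat \<Rightarrow> nat" where
  "tri 0 = 0" | "tri (Suc k) = tri k + k"

lemma tri_double: "2 * tri k + k = k * k"
  by (induction k) (auto simp: algebra_simps)

definition qbin :: "complex \<Rightarrow> nat \<Rightarrow> nat \<Rightarrow> complex" where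
  "qbin c N k = (if k \<le> N then qpoch c c N / (qpoch c c k * qpoch c c (N - k)) else 0)"

lemma qbin_0: assumes "norm c < 1" shows "qbin c N 0 = 1"
  using qpoch_nz'[OF assms assms, of N] by (simp add: qbin_def)

lemma qbin_above: "N < k \<Longrightarrow> qbin c N k = 0" by (simp add: qbin_def)

lemma qbin_N: assumes "norm c < 1" shows "qbin c N N = 1"
  using qpoch_nz'[OF assms assms, of N] by (simp add: qbin_def)

lemma qbin_sym: "k \<le> N \<Longrightarrow> qbin c N (N - k) = qbin c N k"
  by (simp add: qbin_def mult.commute)

lemma alg2:
  fixes PN Pk Pd x y :: complex
  assumes "Pk \<noteq> 0" "Pd \<noteq> 0" "1 - x \<noteq> 0" "1 - y \<noteq> 0"
  shows "PN * (1 - x * y) / (Pk * (1 - x) * (Pd * (1 - y))) = PN / (Pk * (Pd * (1 - y))) + x * (PN / (Pk * (1 - x) * Pd))"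
  using assms by (simp add: divide_simps) (simp add: algebra_simps)

lemma qbin_pascal:
  assumes c: "norm c < 1"
  shows "qbin c (Suc N) (Suc k) = qbin c N k + c^(Suc k) * qbin c N (Suc k)"
proof (cases "k < N")
  case True
  then obtain d where N: "N = Suc k + d" by (metis less_imp_Suc_add add_Suc)
  define P where "P = qpoch c c"
  have PS: "P (Suc m) = P m * (1 - c ^ Suc m)" for m unfolding P_def qpoch_Suc by simp
  have nz: "P m \<noteq> 0" for m unfolding P_def by (rule qpoch_nz'[OF c c])
  have "c \<noteq> 1" using c by auto
  then have nz1: "1 - c ^ Suc m \<noteq> 0" for m using nz_factor[of c c m] c by auto
  have e1: "qbin c (Suc N) (Suc k) = P N * (1 - c^Suc k * c^Suc d) / (P k * (1 - c^Suc k) * (P d * (1 - c^Suc d)))"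
  proof -
    have "Suc N - Suc k = Suc d" "Suc N = Suc (Suc k + d)" using N by auto
    moreover have "c ^ Suc N = c^Suc k * c^Suc d" using N by (simp add: power_add[symmetric])
    ultimately show ?thesis unfolding qbin_def P_def[symmetric] using N
      by (simp only: PS) (simp add: power_add[symmetric])
  qed
  have e2: "qbin c N k = P N / (P k * (P d * (1 - c^Suc d)))"
  proof -
    have "N - k = Suc d" using N by auto
    then show ?thesis unfolding qbin_def P_def[symmetric] using N by (simp add: PS)
  qed
  have e3: "qbin c N (Suc k) = P N / (P k * (1 - c^Suc k) * P d)"
  proof -
    have "N - Suc k = d" using N by auto
    then show ?thesis unfolding qbin_def P_def[symmetric] using N by (simp add: PS)
  qed
  show ?thesis unfolding e1 e2 e3 by (rule alg2[OF nz nz nz1 nz1])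
next
  case False
  show ?thesis
  proof (cases "k = N")
    case True
    then show ?thesis using qbin_N[OF c] qbin_above[of N "Suc N"] by simp
  next
    case False
    with \<open>\<not> k < N\<close> have "N < k" by simp
    then show ?thesis using qbin_above[of N "Suc k"] qbin_above[of N k] qbin_above[of "Suc N" "Suc k"] by simp
  qed
qed

theorem rothe:
  assumes c: "norm c < 1"
  shows "qpoch x c N = (\<Sum>k\<le>N. qbin c N k * (-1)^k * c^(tri k) * x^k)"
proof (induction N arbitrary: x)
  case 0 then show ?case using qbin_0[OF c] by simp
next
  case (Suc N)
  define S where "S = (\<Sum>k\<le>N. qbin c N k * (-1)^k * c^(tri k) * (x*c)^k)"
  define g where "g k = qbin c N k * (-1)^k * c^(tri k) * (x*c)^k" for k
  have L: "qpoch x c (Suc N) = (1 - x) * S"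
    using qpoch_add[of x c 1 N] Suc.IH[of "x*c"] unfolding S_def by (simp add: qpoch_def)
  have "(\<Sum>k\<le>Suc N. qbin c (Suc N) k * (-1)^k * c^(tri k) * x^k)
      = 1 + (\<Sum>k\<le>N. qbin c (Suc N) (Suc k) * (-1)^(Suc k) * c^(tri (Suc k)) * x^(Suc k))"
    by (subst sum.atMost_Suc_shift) (simp add: qbin_0[OF c])
  also have "\<dots> = 1 + (\<Sum>k\<le>N. (- x) * g k + g (Suc k))"
  proof -
    have "qbin c (Suc N) (Suc k) * (-1)^(Suc k) * c^(tri (Suc k)) * x^(Suc k) = (- x) * g k + g (Suc k)" for k
      unfolding qbin_pascal[OF c] g_def by (simp add: power_mult_distrib power_add algebra_simps)
    then show ?thesis by simp
  qed
  also have "\<dots> = 1 - x * S + (\<Sum>k\<le>N. g (Suc k))"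
    unfolding sum.distrib S_def g_def by (simp add: sum_distrib_left sum_negf)
  also have "(\<Sum>k\<le>N. g (Suc k)) = S - 1"
  proof -
    have "(\<Sum>k\<le>Suc N. g k) = g 0 + (\<Sum>k\<le>N. g (Suc k))" by (rule sum.atMost_Suc_shift)
    moreover have "(\<Sum>k\<le>Suc N. g k) = S + g (Suc N)" unfolding S_def g_def by simp
    moreover have "g (Suc N) = 0" unfolding g_def using qbin_above[of N "Suc N"] by simp
    moreover have "g 0 = 1" unfolding g_def using qbin_0[OF c] by simp
    ultimately have h: "1 + (\<Sum>k\<le>N. g (Suc k)) = S" by simp
    show ?thesis by (metis add_diff_cancel_left' h)
  qed
  finally show ?case unfolding L by (simp add: algebra_simps)
qed

lemma sym_split:
  fixes g :: "nat \<Rightarrow> complex"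
  shows "(\<Sum>k\<le>2*n. g k) = g n + (\<Sum>j=1..n. g (n+j) + g (n-j))"
proof (induction n arbitrary: g)
  case 0 then show ?case by simp
next
  case (Suc n)
  have "(\<Sum>k\<le>2*Suc n. g k) = g 0 + (\<Sum>k\<le>Suc (2*n). g (Suc k))"
    by (simp add: sum.atMost_Suc_shift del: sum.atMost_Suc)
  also have "\<dots> = g 0 + g (Suc (Suc (2*n))) + (\<Sum>k\<le>2*n. g (Suc k))" by simp
  also have "(\<Sum>k\<le>2*n. g (Suc k)) = g (Suc n) + (\<Sum>j=1..n. g (Suc (n+j)) + g (Suc (n-j)))"
    using Suc.IH[of "\<lambda>k. g (Suc k)"] by simp
  also have "(\<Sum>j=1..n. g (Suc (n+j)) + g (Suc (n-j))) = (\<Sum>j=1..n. g (Suc n+j) + g (Suc n-j))"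
    by (intro sum.cong) (auto simp: Suc_diff_le)
  finally show ?case by (simp add: sum.cl_ivl_Suc algebra_simps mult_2_right)
qed

lemma prod_odd_pow: "(\<Prod>i<n. (p::complex)^(2*i+1)) = p^(n^2)"
proof (induction n)
  case 0 then show ?case by simp
next
  case (Suc n)
  have "(Suc n)^2 = n^2 + (2*n+1)" by (simp add: power2_eq_square)
  then show ?case using Suc by (simp add: power_add)
qed

lemma left_prod:
  fixes p :: complex assumes p: "p \<noteq> 0"
  shows "p^(n^2) * qpoch (p / p^(2*n)) (p^2) n = (-1)^n * qpoch p (p^2) n"
proof -
  have fac: "1 - p / p^(2*n) * (p^2)^(n - Suc i) = (-1) * (1 - p * (p^2)^i) / p^(2*i+1)" if i: "i < n" for i
  proof -
    define a where "a = n - Suc i"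
    have "2*n = 1 + 2*a + (2*i+1)" unfolding a_def using i by simp
    then have pn: "p^(2*n) = p * (p^2)^a * p^(2*i+1)" by (simp add: power_add power_mult)
    have pi: "p * (p^2)^i = p^(2*i+1)" by (simp add: power_add power_mult)
    show ?thesis unfolding a_def[symmetric] pn pi using p by (simp add: field_simps)
  qed
  have "qpoch (p / p^(2*n)) (p^2) n = (\<Prod>i<n. 1 - p / p^(2*n) * (p^2)^(n - Suc i))"
    unfolding qpoch_def by (rule prod.nat_diff_reindex[symmetric])
  also have "\<dots> = (\<Prod>i<n. (-1) * (1 - p * (p^2)^i) / p^(2*i+1))"
    by (intro prod.cong refl fac) simp
  also have "\<dots> = (-1)^n * qpoch p (p^2) n / p^(n^2)"
    unfolding prod_dividef prod.distrib prod_odd_pow[symmetric] qpoch_def by simp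
  finally show ?thesis using p by (simp add: field_simps)
qed

lemma fin_gauss:
  fixes p :: complex assumes p1: "norm p < 1" and p: "p \<noteq> 0"
  shows "qpoch p (p^2) n ^ 2 = qbin (p^2) (2*n) n + 2 * (\<Sum>j=1..n. (-1)^j * p^(j^2) * qbin (p^2) (2*n) (n+j))"
proof -
  define c where "c = p^2"
  have c: "norm c < 1" unfolding c_def using norm_qpow_lt1[OF p1, of 2] by simp
  define x where "x = p / p^(2*n)"
  define e where "e k = (if n \<le> k then (k-n)^2 else (n-k)^2)" for k
  define g where "g k = qbin c (2*n) k * (-1)^k * p^(e k)" for k
  have xc: "x * c^n = p" unfolding x_def c_def using p by (simp add: power_mult[symmetric])
  have "p^(n^2) * qpoch x c (2*n) = p^(n^2) * qpoch x c n * qpoch p c n"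
    using qpoch_add[of x c n n] unfolding xc by (simp add: mult_2)
  also have "\<dots> = (-1)^n * qpoch p c n ^ 2"
    unfolding x_def c_def left_prod[OF p] by (simp add: power2_eq_square)
  finally have L: "p^(n^2) * qpoch x c (2*n) = (-1)^n * qpoch p c n ^ 2" .
  have hterm: "p^(n^2) * (qbin c (2*n) k * (-1)^k * c^(tri k) * x^k) = g k" for k
  proof -
    have ex: "n^2 + k*k = e k + 2*n*k"
    proof (cases "n \<le> k")
      case True then obtain d where "k = n + d" using le_Suc_ex by blast
      then show ?thesis unfolding e_def by (simp add: power2_eq_square algebra_simps)
    next
      case False then obtain d where "n = k + d" by (metis le_Suc_ex nat_le_linear)
      then show ?thesis using False unfolding e_def by (simp add: power2_eq_square algebra_simps)
    qed
    have "c^(tri k) * x^k * p^(2*n*k) = p^(k*k)"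
    proof -
      have "c^(tri k) * x^k * p^(2*n*k) = p^(2 * tri k) * p^k * (p^(2*n*k) / (p^(2*n))^k)"
        unfolding c_def x_def by (simp add: power_mult power_divide)
      also have "(p^(2*n))^k = p^(2*n*k)" by (simp add: power_mult)
      also have "p^(2 * tri k) * p^k * (p^(2*n*k) / p^(2*n*k)) = p^(2 * tri k + k)" using p by (simp add: power_add)
      finally show ?thesis unfolding tri_double .
    qed
    then have A: "(c^(tri k) * x^k) * p^(2*n*k) = p^(k*k)" by simp
    have "p^(n^2) * (c^(tri k) * x^k) * p^(2*n*k) = p^(n^2) * p^(k*k)"
      using A by (simp only: mult.assoc)
    also have "\<dots> = p^(n^2 + k*k)" by (simp only: power_add)
    also have "\<dots> = p^(e k) * p^(2*n*k)" by (simp only: ex power_add)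
    finally have "p^(n^2) * (c^(tri k) * x^k) = p^(e k)"
      using p by simp
    then show ?thesis unfolding g_def by (simp add: mult_ac)
  qed
  have R: "qpoch x c (2*n) = (\<Sum>k\<le>2*n. qbin c (2*n) k * (-1)^k * c^(tri k) * x^k)"
    by (rule rothe[OF c])
  have "(-1)^n * qpoch p c n ^ 2 = p^(n^2) * qpoch x c (2*n)" using L by simp
  also have "\<dots> = (\<Sum>k\<le>2*n. g k)" unfolding R sum_distrib_left hterm ..
  finally have "(-1)^n * qpoch p c n ^ 2 = (\<Sum>k\<le>2*n. g k)" .
  also have "\<dots> = g n + (\<Sum>j=1..n. g (n+j) + g (n-j))" by (rule sym_split)
  also have "\<dots> = (-1)^n * (qbin c (2*n) n + 2 * (\<Sum>j=1..n. (-1)^j * p^(j^2) * qbin c (2*n) (n+j)))"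
  proof -
    have "g (n+j) + g (n-j) = (-1)^n * (2 * ((-1)^j * p^(j^2) * qbin c (2*n) (n+j)))" if j: "j \<in> {1..n}" for j
    proof -
      have s: "qbin c (2*n) (n-j) = qbin c (2*n) (n+j)"
        using qbin_sym[of "n+j" "2*n" c] j by (simp add: mult_2)
      have m: "(-1::complex)^(n-j) = (-1)^n * (-1)^j"
      proof -
        have nj: "n + j = (n - j) + 2*j" using j by auto
        have "(-1::complex)^(n+j) = (-1)^(n-j) * ((-1)^2)^j"
          unfolding nj power_add power_mult ..
        then show ?thesis by (simp add: power_add)
      qed
      have e1: "e (n+j) = j^2" "e (n-j) = j^2" unfolding e_def using j by auto
      show ?thesis unfolding g_def e1 s m by (simp add: power_add algebra_simps)
    qed
    then have "(\<Sum>j=1..n. g (n+j) + g (n-j)) = (-1)^n * (2 * (\<Sum>j=1..n. (-1)^j * p^(j^2) * qbin c (2*n) (n+j)))"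
      by (simp add: sum_distrib_left)
    moreover have "g n = (-1)^n * qbin c (2*n) n" unfolding g_def e_def by simp
    ultimately show ?thesis by (simp add: algebra_simps)
  qed
  finally have "(-1)^n * qpoch p c n ^ 2 = (-1)^n * (qbin c (2*n) n + 2 * (\<Sum>j=1..n. (-1)^j * p^(j^2) * qbin c (2*n) (n+j)))" .
  then show ?thesis unfolding c_def by simp
qed

definition Mb :: "complex \<Rightarrow> real" where
  "Mb c = exp (norm c / (1 - norm c)) / (exp (- norm c / ((1 - norm c) * (1 - norm c))))^2"

lemma qbin_bound:
  assumes c: "norm c < 1"
  shows "norm (qbin c N k) \<le> Mb c"
proof (cases "k \<le> N")
  case True
  define lb where "lb = exp (- norm c / ((1 - norm c) * (1 - norm c)))"
  have lb: "0 < lb" "\<And>m. lb \<le> norm (qpoch c c m)"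
    unfolding lb_def using qpoch_lower[OF c c] by auto
  have up: "norm (qpoch c c N) \<le> exp (norm c / (1 - norm c))" by (rule qpoch_upper[OF c])
  have "norm (qbin c N k) = norm (qpoch c c N) / (norm (qpoch c c k) * norm (qpoch c c (N - k)))"
    using True by (simp add: qbin_def norm_divide norm_mult)
  also have "\<dots> \<le> exp (norm c / (1 - norm c)) / (lb * lb)"
  proof (rule frac_le)
    show "lb * lb \<le> norm (qpoch c c k) * norm (qpoch c c (N - k))"
      by (intro mult_mono lb) (use lb in auto)
  qed (use up lb in auto)
  also have "\<dots> = Mb c" unfolding Mb_def lb_def by (simp add: power2_eq_square)
  finally show ?thesis .
next
  case False
  then show ?thesis by (simp add: qbin_def Mb_def)
qed

lemma qbin_lim:
  assumes c: "norm c < 1"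
  shows "(\<lambda>n. qbin c (2*n) (n+j)) \<longlonglongrightarrow> 1 / qpoch_inf c c"
proof -
  define P where "P = qpoch c c"
  define L where "L = qpoch_inf c c"
  have L0: "L \<noteq> 0" unfolding L_def by (rule qpoch_inf_nz'[OF c c])
  have lim: "P \<longlonglongrightarrow> L" unfolding P_def L_def by (rule qpoch_lim[OF c])
  have l1: "(\<lambda>n. P (2*n)) \<longlonglongrightarrow> L"
    by (rule LIMSEQ_subseq_LIMSEQ[OF lim, unfolded o_def]) (simp add: strict_mono_def)
  have l2: "(\<lambda>n. P (n+j)) \<longlonglongrightarrow> L"
    by (rule LIMSEQ_ignore_initial_segment[OF lim])
  have l3: "(\<lambda>n. P (n-j)) \<longlonglongrightarrow> L"
    by (rule LIMSEQ_offset[where k=j]) (simp add: lim)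
  have "(\<lambda>n. P (2*n) / (P (n+j) * P (n-j))) \<longlonglongrightarrow> L / (L * L)"
    by (intro tendsto_divide tendsto_mult l1 l2 l3) (use L0 in simp)
  moreover have "eventually (\<lambda>n. P (2*n) / (P (n+j) * P (n-j)) = qbin c (2*n) (n+j)) sequentially"
  proof (rule eventually_sequentiallyI[of j])
    fix n assume "j \<le> n"
    then have "n + j \<le> 2*n" "2*n - (n+j) = n - j" by auto
    then show "P (2*n) / (P (n+j) * P (n-j)) = qbin c (2*n) (n+j)" unfolding qbin_def P_def by simp
  qed
  ultimately have "(\<lambda>n. qbin c (2*n) (n+j)) \<longlonglongrightarrow> L / (L * L)"
    by (rule Lim_transform_eventually)
  then show ?thesis using L0 unfolding L_def by simp
qed

theorem gauss:
  fixes p :: complex assumes p1: "norm p < 1" and p: "p \<noteq> 0"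
  shows "summable (\<lambda>k. (-1)^(k+1) * p^((k+1)^2))"
    and "qpoch_inf p p / qpoch_inf (-p) p = 1 + 2 * (\<Sum>k. (-1)^(k+1) * p^((k+1)^2))"
proof -
  define c where "c = p^2"
  have c: "norm c < 1" unfolding c_def using norm_qpow_lt1[OF p1, of 2] by simp
  define L where "L = qpoch_inf c c"
  have L0: "L \<noteq> 0" unfolding L_def by (rule qpoch_inf_nz'[OF c c])
  define th where "th k = (-1)^(k+1) * p^((k+1)^2)" for k :: nat
  define a where "a k n = (if k < n then th k * qbin c (2*n) (n+(k+1)) else 0)" for k n
  define r where "r = norm p"
  have r: "0 \<le> r" "r < 1" using p1 unfolding r_def by auto
  have suma: "(\<Sum>j=1..n. (-1)^j * p^(j^2) * qbin c (2*n) (n+j)) = (\<Sum>k. a k n)" for n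
  proof -
    have "(\<Sum>j=1..n. (-1)^j * p^(j^2) * qbin c (2*n) (n+j)) = (\<Sum>k<n. th k * qbin c (2*n) (n+(k+1)))"
      unfolding th_def sum.atLeast1_atMost_eq[folded One_nat_def] by simp
    also have "\<dots> = (\<Sum>k<n. a k n)" unfolding a_def by simp
    also have "\<dots> = (\<Sum>k. a k n)" by (rule suminf_finite[symmetric]) (auto simp: a_def)
    finally show ?thesis .
  qed
  have tlim: "\<And>k. (\<lambda>n. a k n) \<longlonglongrightarrow> th k * (1 / L)"
  proof -
    fix k
    have "(\<lambda>n. th k * qbin c (2*n) (n+(k+1))) \<longlonglongrightarrow> th k * (1 / L)"
      unfolding L_def by (rule tendsto_mult_left[OF qbin_lim[OF c]])
    moreover have "eventually (\<lambda>n. th k * qbin c (2*n) (n+(k+1)) = a k n) sequentially"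
      by (rule eventually_sequentiallyI[of "Suc k"]) (simp add: a_def)
    ultimately show "(\<lambda>n. a k n) \<longlonglongrightarrow> th k * (1 / L)" by (rule Lim_transform_eventually)
  qed
  have tsum: "summable (\<lambda>k. Mb c * r^k)" by (rule summable_mult[OF summable_geometric]) (use r in auto)
  have tbnd: "\<forall>\<^sub>F (k, n) in at_top \<times>\<^sub>F sequentially. norm (a k n) \<le> Mb c * r^k"
  proof (intro always_eventually allI, clarify)
    fix k n
    have Mb0: "0 \<le> Mb c" by (simp add: Mb_def)
    have "norm (th k) = r^((k+1)^2)" unfolding th_def r_def by (simp add: norm_mult norm_power)
    also have "\<dots> \<le> r^k"
    proof (rule power_decreasing)
      show "k \<le> (k+1)^2" by (simp add: power2_eq_square)
    qed (use r in auto)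
    finally have t: "norm (th k) \<le> r^k" .
    show "norm (a k n) \<le> Mb c * r^k"
    proof (cases "k < n")
      case True
      have "norm (a k n) = norm (th k) * norm (qbin c (2*n) (n+(k+1)))" using True by (simp add: a_def norm_mult)
      also have "\<dots> \<le> r^k * Mb c" by (rule mult_mono[OF t qbin_bound[OF c]]) (use r in auto)
      finally show ?thesis by (simp add: mult.commute)
    next
      case False then show ?thesis using Mb0 r by (simp add: a_def)
    qed
  qed
  have bot: "(sequentially :: nat filter) \<noteq> bot" by simp
  have tann: "summable (\<lambda>k. norm (th k * (1 / L))) \<and> ((\<lambda>n. \<Sum>k. a k n) \<longlongrightarrow> (\<Sum>k. th k * (1 / L))) sequentially"
    by (rule conjunct2[OF tannerys_theorem[OF tlim tbnd tsum bot]])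
  have sth: "summable th"
  proof -
    have "summable (\<lambda>k. th k * (1/L))" using tann[THEN conjunct1] by (rule summable_norm_cancel)
    then have "summable (\<lambda>k. L * (th k * (1/L)))" by (rule summable_mult)
    then show ?thesis using L0 by simp
  qed
  then show "summable (\<lambda>k. (-1)^(k+1) * p^((k+1)^2))" unfolding th_def .
  have fg: "qpoch p c n ^ 2 = qbin c (2*n) (n+0) + 2 * (\<Sum>k. a k n)" for n
    using fin_gauss[OF p1 p, of n] unfolding c_def[symmetric] suma by simp
  have l1: "(\<lambda>n. qpoch p c n ^ 2) \<longlonglongrightarrow> qpoch_inf p c ^ 2"
    by (intro tendsto_power qpoch_lim c)
  have l2: "(\<lambda>n. qbin c (2*n) (n+0) + 2 * (\<Sum>k. a k n)) \<longlonglongrightarrow> 1 / L + 2 * (\<Sum>k. th k * (1 / L))"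
  proof -
    have q1: "(\<lambda>n. qbin c (2*n) (n+0)) \<longlonglongrightarrow> 1 / L" unfolding L_def by (rule qbin_lim[OF c])
    have q2: "(\<lambda>n. \<Sum>k. a k n) \<longlonglongrightarrow> (\<Sum>k. th k * (1 / L))" using tann by (rule conjunct2)
    show ?thesis by (rule tendsto_add[OF q1 tendsto_mult_left[OF q2]])
  qed
  have "qpoch_inf p c ^ 2 = 1 / L + 2 * (\<Sum>k. th k * (1 / L))"
    using LIMSEQ_unique[OF l1 l2[folded fg]] .
  also have "(\<Sum>k. th k * (1 / L)) = suminf th / L"
    using suminf_divide[OF sth, of L] by simp
  finally have T0: "qpoch_inf p c ^ 2 = 1 / L + 2 * (suminf th / L)" .
  have T: "L * qpoch_inf p c ^ 2 = 1 + 2 * suminf th"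
  proof -
    have "L * qpoch_inf p c ^ 2 = L * (1 / L) + 2 * (L * (suminf th / L))"
      unfolding T0 by (simp only: distrib_left mult.left_commute)
    then show ?thesis using L0 by simp
  qed
  have e1: "qpoch_inf p p = qpoch_inf p c * L"
    using qpoch_inf_double[OF p1, of p] unfolding L_def c_def by (simp add: power2_eq_square)
  have e2: "qpoch_inf (-p) p * qpoch_inf p p = L"
    using qpoch_inf_pm[OF p1, of p] unfolding L_def c_def .
  have nz: "qpoch_inf p p \<noteq> 0" "qpoch_inf (-p) p \<noteq> 0"
    using qpoch_inf_nz'[OF p1 p1] qpoch_inf_nz'[OF _ p1, of "-p"] p1 by auto
  have "qpoch_inf p p / qpoch_inf (-p) p = qpoch_inf p p * qpoch_inf p p / L"
  proof -
    have "qpoch_inf (-p) p = L / qpoch_inf p p" using e2 nz by (simp add: eq_divide_eq)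
    then show ?thesis using nz by simp
  qed
  also have "\<dots> = L * qpoch_inf p c ^ 2" unfolding e1 using L0 by (simp add: power2_eq_square)
  finally show "qpoch_inf p p / qpoch_inf (-p) p = 1 + 2 * (\<Sum>k. (-1)^(k+1) * p^((k+1)^2))"
    unfolding T th_def .
qed

lemma alg4:
  fixes s Y Ip u Y' Im Qp Qm A A' D X B B' X' :: complex
  assumes "X \<noteq> 0" "X' \<noteq> 0" "A' \<noteq> 0" "B \<noteq> 0" "B' \<noteq> 0" "u \<noteq> 0" "Qm \<noteq> 0"
    and "Qp = B * Ip" "Qm = B' * Im" "X * Y = A * B" "X' * Y' = A' * B'" "D * u = 2 * X'"
  shows "(s * Y * Ip) / (u * Y' * Im) = (Qp / Qm) / 2 * (s * (A / A') * (D / X))"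
proof -
  have Y: "Y = A * B / X" "Y' = A' * B' / X'" "D = 2 * X' / u" "Ip = Qp / B" "Im = Qm / B'"
    using assms by (auto simp: field_simps)
  show ?thesis unfolding Y using assms(1-7) by (simp add: field_simps)
qed

lemma term_eq:
  fixes q :: complex assumes q: "norm q < 1"
  shows "(q ^ (n+1) * qpoch (q ^ (n+2)) q (n+1) * qpoch_inf (q ^ (2*n+4)) (q^2))
              / ((1 + q ^ (n+1)) * qpoch (- (q ^ (n+2))) q (n+1) * qpoch_inf (- (q ^ (2*n+4))) (q^2))
         = (qpoch_inf (q^2) (q^2) / qpoch_inf (-(q^2)) (q^2)) / 2 * (q^(n+1) * hh q (n+1) * qd q (n+1))"
proof -
  define m where "m = n + 1"
  define b2 where "b2 = q^2"
  have b2: "norm b2 < 1" unfolding b2_def using norm_qpow_lt1[OF q, of 2] by simp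
  have pm: "b2 * b2^m = q^(2*n+4)"
  proof -
    have e: "2 + 2*m = 2*n+4" unfolding m_def by simp
    have "b2 * b2^m = q^2 * q^(2*m)" unfolding b2_def by (simp only: power_mult)
    also have "\<dots> = q^(2 + 2*m)" by (simp only: power_add)
    finally show ?thesis unfolding e .
  qed
  have qm: "q * q^m = q^(n+2)" unfolding m_def by simp
  have s1: "qpoch_inf b2 b2 = qpoch b2 b2 m * qpoch_inf (q^(2*n+4)) b2"
    using qpoch_inf_split[OF b2, of b2 m] unfolding pm .
  have s2: "qpoch_inf (-b2) b2 = qpoch (-b2) b2 m * qpoch_inf (-(q^(2*n+4))) b2"
    using qpoch_inf_split[OF b2, of "-b2" m] pm by simp
  have xy: "qpoch q q m * qpoch (q^(n+2)) q m = qpoch q b2 m * qpoch b2 b2 m"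
  proof -
    have "qpoch q q (m+m) = qpoch q q m * qpoch (q^(n+2)) q m" unfolding qpoch_add qm ..
    moreover have "qpoch q q (2*m) = qpoch q b2 m * qpoch b2 b2 m"
      unfolding qpoch_double b2_def by (simp add: power2_eq_square)
    ultimately show ?thesis by (simp add: mult_2)
  qed
  have xy': "qpoch (-q) q m * qpoch (-(q^(n+2))) q m = qpoch (-q) b2 m * qpoch (-b2) b2 m"
  proof -
    have qm': "(-q) * q^m = -(q^(n+2))" using qm by simp
    have "qpoch (-q) q (m+m) = qpoch (-q) q m * qpoch (-(q^(n+2))) q m" unfolding qpoch_add qm' ..
    moreover have "qpoch (-q) q (2*m) = qpoch (-q) b2 m * qpoch (-b2) b2 m"
      unfolding qpoch_double b2_def by (simp add: power2_eq_square)
    ultimately show ?thesis by (simp add: mult_2)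
  qed
  have dn: "qpoch (-1) q m * (1 + q^m) = 2 * qpoch (-q) q m" by (rule qpoch_neg1)
  have nz: "qpoch q q m \<noteq> 0" "qpoch (-q) q m \<noteq> 0" "qpoch (-q) b2 m \<noteq> 0" "qpoch b2 b2 m \<noteq> 0"
    "qpoch (-b2) b2 m \<noteq> 0" "1 + q^m \<noteq> 0" "qpoch_inf (-b2) b2 \<noteq> 0"
    using qpoch_nz'[OF q q] qpoch_nz'[OF _ q, of "-q"] qpoch_nz'[OF _ b2, of "-q"] qpoch_nz'[OF b2 b2]
      qpoch_nz'[OF _ b2, of "-b2"] nz_factor[of "-1" q m] qpoch_inf_nz'[OF _ b2, of "-b2"] q b2 by auto
  have "(q ^ m * qpoch (q ^ (n+2)) q m * qpoch_inf (q ^ (2*n+4)) b2)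
              / ((1 + q ^ m) * qpoch (- (q ^ (n+2))) q m * qpoch_inf (- (q ^ (2*n+4))) b2)
       = (qpoch_inf b2 b2 / qpoch_inf (-b2) b2) / 2 * (q^m * (qpoch q b2 m / qpoch (-q) b2 m) * (qpoch (-1) q m / qpoch q q m))"
    by (rule alg4[OF nz(1,2,3,4,5,6,7) s1 s2 xy xy' dn])
  then show ?thesis unfolding m_def[symmetric] b2_def[symmetric] hh_def qd_def by simp
qed

theorem lemma4p1:
  fixes q :: complex
  assumes "norm q < 1"
  shows "(\<Sum>n. (q ^ (n+1) * qpoch (q ^ (n+2)) q (n+1) * qpoch_inf (q ^ (2*n+4)) (q^2))
              / ((1 + q ^ (n+1)) * qpoch (- (q ^ (n+2))) q (n+1) * qpoch_inf (- (q ^ (2*n+4))) (q^2)))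
       = - (\<Sum>n. (-1) ^ (n+1) * q ^ (2 * (n+1)^2))
         + (\<Sum>k. q ^ (k+1) * qpoch q (q^2) (k+1) / (qpoch (-q) (q^2) (k+1) * (1 + q ^ (2*(k+1)))))"
proof (cases "q = 0")
  case True
  then show ?thesis by (simp add: power_0_left)
next
  case False
  note q = assms
  define b2 where "b2 = q^2"
  have b2: "norm b2 < 1" unfolding b2_def using norm_qpow_lt1[OF q, of 2] by simp
  have b20: "b2 \<noteq> 0" unfolding b2_def using False by simp
  define R where "R = qpoch_inf b2 b2 / qpoch_inf (-b2) b2"
  have R0: "R \<noteq> 0" unfolding R_def using qpoch_inf_nz'[OF b2 b2] qpoch_inf_nz'[OF _ b2, of "-b2"] b2 by simp
  define Bt where "Bt j = q^j * hh q j / (1 + q^(2*j))" for j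
  define g where "g m = q^m * hh q m * qd q m" for m
  have th_eq: "(\<lambda>n. (-1) ^ (n+1) * q ^ (2 * (n+1)^2)) = (\<lambda>k. (-1)^(k+1) * b2^((k+1)^2))"
    unfolding b2_def by (simp add: power_mult)
  have G: "R = 1 + 2 * (\<Sum>k. (-1)^(k+1) * b2^((k+1)^2))"
    unfolding R_def by (rule gauss(2)[OF b2 b20])
  have sB: "summable Bt" unfolding Bt_def by (rule core(1)[OF q])
  have cs: "g sums (2 * (1 / R) * suminf Bt)"
    using core(2)[OF q] unfolding g_def Bt_def R_def b2_def by simp
  have g0: "g 0 = 1" unfolding g_def hh_def by simp
  have gs: "(\<lambda>n. g (Suc n)) sums (2 * (1 / R) * suminf Bt - 1)"
    using cs sums_Suc_iff[of g "2 * (1 / R) * suminf Bt - 1"] g0 by simp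
  have ls: "(\<lambda>n. (q ^ (n+1) * qpoch (q ^ (n+2)) q (n+1) * qpoch_inf (q ^ (2*n+4)) (q^2))
              / ((1 + q ^ (n+1)) * qpoch (- (q ^ (n+2))) q (n+1) * qpoch_inf (- (q ^ (2*n+4))) (q^2)))
           sums (R / 2 * (2 * (1 / R) * suminf Bt - 1))"
    unfolding term_eq[OF q] using sums_mult[OF gs, of "R/2"] unfolding g_def R_def b2_def by simp
  have L: "R / 2 * (2 * (1 / R) * suminf Bt - 1) = suminf Bt - R / 2"
    using R0 by (simp add: field_simps)
  have Bt0: "Bt 0 = 1/2" unfolding Bt_def hh_def by simp
  have bs: "(\<lambda>k. Bt (Suc k)) sums (suminf Bt - 1/2)"
    using summable_sums[OF sB] sums_Suc_iff[of Bt "suminf Bt - 1/2"] Bt0 by simp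
  have bt_eq: "(\<lambda>k. q ^ (k+1) * qpoch q (q^2) (k+1) / (qpoch (-q) (q^2) (k+1) * (1 + q ^ (2*(k+1))))) = (\<lambda>k. Bt (Suc k))"
    unfolding Bt_def hh_def by (simp add: times_divide_eq_right divide_divide_eq_left)
  show ?thesis
    unfolding sums_unique[OF ls, symmetric] L th_eq bt_eq sums_unique[OF bs, symmetric]
    using G by (simp add: field_simps)
qed

end
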